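(* Let $a,\alpha$ be real numbers with $-1<\alpha<a<1$. Then the solutions $\beta,b$ of the equation $$x^2+(a+\alpha)x+\frac{(a-\alpha)^2}{1-a\alpha}-3=0$$ are real, and, labeling them so that $\beta\le b$, one has $\beta<-1$ and $b>1$. *)

theory Defs
  imports "HOL-Analysis.Analysis"
begin

end

theory Submission
  imports Defs
begin

lemma key1:
  fixes a \<alpha> :: real
  assumes "-1 < \<alpha>" and "\<alpha> < a" and "a < 1"
  shows "1 + (a+\<alpha>) + ((a - \<alpha>)\<^sup>2 / (1 - a * \<alpha>) - 3) < 0"
    and "1 - (a+\<alpha>) + ((a - \<alpha>)\<^sup>2 / (1 - a * \<alpha>) - 3) < 0"
proof -
  have "\<bar>a\<bar> < 1" "\<bar>\<alpha>\<bar> < 1" using assms by auto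
  then have "\<bar>a*\<alpha>\<bar> < 1" by (metis abs_mult abs_ge_zero mult_strict_mono' mult_1_left)
  then have d: "1 - a*\<alpha> > 0" by linarith
  have "(a-\<alpha>)\<^sup>2 < (2-a-\<alpha>)*(1-a*\<alpha>)"
  proof -
    have "(2-a-\<alpha>)*(1-a*\<alpha>) - (a-\<alpha>)\<^sup>2 = (1-a)*(1-\<alpha>)*(2+a+\<alpha>)"
      by (simp add: algebra_simps power2_eq_square)
    moreover have "(1-a)*(1-\<alpha>)*(2+a+\<alpha>) > 0" using assms by simp
    ultimately show ?thesis by linarith
  qed
  then have "(a - \<alpha>)\<^sup>2 / (1 - a * \<alpha>) < 2-a-\<alpha>" using d by (simp add: divide_less_eq)
  then show "1 + (a+\<alpha>) + ((a - \<alpha>)\<^sup>2 / (1 - a * \<alpha>) - 3) < 0" by linarith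
  have "(a-\<alpha>)\<^sup>2 < (2+a+\<alpha>)*(1-a*\<alpha>)"
  proof -
    have "(2+a+\<alpha>)*(1-a*\<alpha>) - (a-\<alpha>)\<^sup>2 = (1+a)*(1+\<alpha>)*(2-a-\<alpha>)"
      by (simp add: algebra_simps power2_eq_square)
    moreover have "(1+a)*(1+\<alpha>)*(2-a-\<alpha>) > 0" using assms by simp
    ultimately show ?thesis by linarith
  qed
  then have "(a - \<alpha>)\<^sup>2 / (1 - a * \<alpha>) < 2+a+\<alpha>" using d by (simp add: divide_less_eq)
  then show "1 - (a+\<alpha>) + ((a - \<alpha>)\<^sup>2 / (1 - a * \<alpha>) - 3) < 0" by linarith
qed

lemma quad:
  fixes p q :: real
  assumes h1: "1 + p + q < 0" and h2: "1 - p + q < 0"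
  shows "\<exists>\<beta> b :: real. \<beta> \<le> b \<and>
     (\<forall>z :: complex. z\<^sup>2 + complex_of_real p * z + complex_of_real q = 0
        \<longleftrightarrow> z = complex_of_real \<beta> \<or> z = complex_of_real b) \<and>
     \<beta> < -1 \<and> 1 < b"
proof -
  define Dsc where "Dsc = p\<^sup>2 - 4*q"
  have Dp: "Dsc > 0" unfolding Dsc_def using h1 h2 zero_le_power2[of p] by linarith
  define s where "s = sqrt Dsc"
  have s0: "s > 0" and sqD: "s * s = Dsc" using Dp by (auto simp: s_def)
  define \<beta> where "\<beta> = (-p - s)/2"
  define b where "b = (-p + s)/2"
  have sum: "\<beta> + b = -p" and prod: "\<beta> * b = q"
    unfolding \<beta>_def b_def using sqD by (auto simp: Dsc_def field_simps power2_eq_square)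
  have fact: "\<And>x::real. x\<^sup>2 + p*x + q = (x-\<beta>)*(x-b)"
  proof -
    fix x :: real
    have "x\<^sup>2 + p*x + q - (x-\<beta>)*(x-b) = (p+\<beta>+b)*x + (q - \<beta>*b)"
      by (simp add: algebra_simps power2_eq_square)
    also have "\<dots> = 0" using sum prod by simp
    finally show "x\<^sup>2 + p*x + q = (x-\<beta>)*(x-b)" by simp
  qed
  have le: "\<beta> \<le> b" using s0 by (simp add: \<beta>_def b_def)
  have "(1-\<beta>)*(1-b) < 0" using fact[of 1] h1 by simp
  then have b1: "1 < b" using le mult_nonneg_nonneg[of "1-\<beta>" "1-b"] mult_nonneg_nonneg[of "\<beta>-1" "b-1"] by (cases "1 < b") (auto simp: algebra_simps)
  have "(-1-\<beta>)*(-1-b) < 0" using fact[of "-1"] h2 by simp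
  then have b2: "\<beta> < -1" using le mult_nonneg_nonneg[of "-1-\<beta>" "-1-b"] mult_nonneg_nonneg[of "\<beta>+1" "b+1"] by (cases "\<beta> < -1") (auto simp: algebra_simps)
  have cfact: "\<And>z::complex. z\<^sup>2 + complex_of_real p * z + complex_of_real q
      = (z - complex_of_real \<beta>) * (z - complex_of_real b)"
  proof -
    fix z :: complex
    have "complex_of_real p = - (complex_of_real \<beta> + complex_of_real b)" using sum
      by (metis add.inverse_inverse of_real_add of_real_minus)
    moreover have "complex_of_real q = complex_of_real \<beta> * complex_of_real b" using prod by (metis of_real_mult)
    ultimately show "z\<^sup>2 + complex_of_real p * z + complex_of_real q
      = (z - complex_of_real \<beta>) * (z - complex_of_real b)"
      by (simp only:) (simp add: algebra_simps power2_eq_square)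
  qed
  show ?thesis
    apply (rule exI[of _ \<beta>], rule exI[of _ b])
    using le b1 b2 by (simp only: cfact mult_eq_0_iff right_minus_eq) simp
qed

theorem lemma4p2:
  fixes a \<alpha> :: real
  assumes "-1 < \<alpha>" and "\<alpha> < a" and "a < 1"
  shows "\<exists>\<beta> b :: real. \<beta> \<le> b \<and>
     (\<forall>z :: complex. z\<^sup>2 + complex_of_real (a + \<alpha>) * z
          + complex_of_real ((a - \<alpha>)\<^sup>2 / (1 - a * \<alpha>) - 3) = 0
        \<longleftrightarrow> z = complex_of_real \<beta> \<or> z = complex_of_real b) \<and>
     \<beta> < -1 \<and> 1 < b"
  using quad[OF key1[OF assms]] .

end
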